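(* Let $\Omega\subset\mathbb{R}^n$ be a bounded convex domain with smooth boundary and let $u$ be a given external potential on $\Omega$. Let $U_1$ and $U_2$ be two solutions of $$-\Delta U(x)=\frac{e^{-(U(x)+u(x))}}{\int_\Omega e^{-(U(y)+u(y))}\,dy}\quad\text{in }\Omega,\qquad U=0\ \text{on }\partial\Omega,$$ and set $I_i:=\int_\Omega \exp(-u-U_i)\,dx$ for $i=1,2$. If $I_1\ge I_2$, then $U_1(x)\le U_2(x)$ for all $x\in\Omega$. In particular, if $I_1=I_2$, then $U_1(x)=U_2(x)$ for all $x\in\Omega$. *)

theory Defs
  imports "HOL-Analysis.Analysis"
begin

fun dderiv :: "'a::euclidean_space list \<Rightarrow> ('a \<Rightarrow> real) \<Rightarrow> 'a \<Rightarrow> real" where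
  "dderiv [] f = f"
| "dderiv (v # vs) f = (\<lambda>x. frechet_derivative (dderiv vs f) (at x) v)"

definition smooth_on :: "'a::euclidean_space set \<Rightarrow> ('a \<Rightarrow> real) \<Rightarrow> bool" where
  "smooth_on S f \<longleftrightarrow>
     (\<forall>vs. set vs \<subseteq> Basis \<longrightarrow>
        (\<forall>x\<in>S. dderiv vs f differentiable (at x)) \<and> continuous_on S (dderiv vs f))"

definition smooth_boundary :: "'a::euclidean_space set \<Rightarrow> bool" where
  "smooth_boundary \<Omega> \<longleftrightarrow>
     (\<forall>p\<in>frontier \<Omega>. \<exists>N \<psi>. open N \<and> p \<in> N \<and> smooth_on N \<psi> \<and>
        (\<forall>x\<in>N. frechet_derivative \<psi> (at x) \<noteq> (\<lambda>_. 0)) \<and>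
        \<Omega> \<inter> N = {x\<in>N. \<psi> x < 0})"

definition C2_on :: "'a::euclidean_space set \<Rightarrow> ('a \<Rightarrow> real) \<Rightarrow> bool" where
  "C2_on S f \<longleftrightarrow>
     (\<forall>x\<in>S. f differentiable (at x)) \<and>
     (\<forall>i\<in>Basis. (\<forall>x\<in>S. dderiv [i] f differentiable (at x)) \<and>
        (\<forall>j\<in>Basis. continuous_on S (dderiv [j, i] f)))"

definition laplacian :: "('a::euclidean_space \<Rightarrow> real) \<Rightarrow> 'a \<Rightarrow> real" where
  "laplacian f x = (\<Sum>i\<in>Basis. dderiv [i, i] f x)"

definition is_solution :: "'a::euclidean_space set \<Rightarrow> ('a \<Rightarrow> real) \<Rightarrow> ('a \<Rightarrow> real) \<Rightarrow> bool" where
  "is_solution \<Omega> u U \<longleftrightarrow>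
     C2_on \<Omega> U \<and> continuous_on (closure \<Omega>) U \<and>
     (\<forall>x\<in>\<Omega>. - laplacian U x =
        exp (- (U x + u x)) / integral \<Omega> (\<lambda>y. exp (- (U y + u y)))) \<and>
     (\<forall>x\<in>frontier \<Omega>. U x = 0)"

end

theory Submission
  imports Defs
begin


lemma second_deriv_max:
  fixes g g' :: "real \<Rightarrow> real"
  assumes d: "\<And>t. \<bar>t\<bar> < r \<Longrightarrow> (g has_real_derivative g' t) (at t)" and r: "r > 0"
    and d2: "(g' has_real_derivative c) (at 0)" and c: "c > 0"
    and mx: "\<And>t. \<bar>t\<bar> < r \<Longrightarrow> g t \<le> g 0"
  shows False
proof -
  have "g' 0 = 0"
    by (rule DERIV_local_max[OF d[of 0] r]) (use r mx in auto)
  from DERIV_pos_inc_right[OF d2 c] obtain e where e: "e > 0" "\<And>h. h > 0 \<Longrightarrow> h < e \<Longrightarrow> g' 0 < g' h"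
    by auto
  define t where "t = min e r / 2"
  have t: "t > 0" "t < e" "t < r" using e r by (auto simp: t_def)
  obtain z where z: "0 < z" "z < t" "g t - g 0 = (t - 0) * g' z"
    using MVT2[of 0 t g g'] t d by force
  have "g' z > 0" using e(2)[of z] z t \<open>g' 0 = 0\<close> by auto
  then have "t * g' z > 0" using t by simp
  then have "g t > g 0" using z by simp
  moreover have "g t \<le> g 0" using mx[of t] t by auto
  ultimately show False by simp
qed

lemma line_deriv:
  fixes f :: "'a::euclidean_space \<Rightarrow> real"
  assumes "f differentiable (at (x + t *\<^sub>R v))"
  shows "((\<lambda>s. f (x + s *\<^sub>R v)) has_real_derivative frechet_derivative f (at (x + t *\<^sub>R v)) v) (at t)"
proof -
  let ?F = "frechet_derivative f (at (x + t *\<^sub>R v))"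
  have F: "(f has_derivative ?F) (at (x + t *\<^sub>R v))"
    using assms frechet_derivative_works by blast
  have L: "((\<lambda>s. x + s *\<^sub>R v) has_derivative (\<lambda>s. s *\<^sub>R v)) (at t)"
    by (auto intro!: derivative_eq_intros)
  have "((\<lambda>s. f (x + s *\<^sub>R v)) has_derivative (\<lambda>s. ?F (s *\<^sub>R v))) (at t)"
    using has_derivative_compose[OF L F] by (simp add: o_def)
  moreover have "(\<lambda>s. ?F (s *\<^sub>R v)) = (*) (?F v)"
    using linear_scale[OF has_derivative_linear[OF F]] by (auto simp: fun_eq_iff)
  ultimately show ?thesis by (simp add: has_field_derivative_def)
qed

lemma integral_pos:
  fixes f :: "'a::euclidean_space \<Rightarrow> real" and \<Omega> :: "'a set"
  assumes "open \<Omega>" "bounded \<Omega>" "\<Omega> \<noteq> {}" "continuous_on (closure \<Omega>) f" "\<And>x. x \<in> closure \<Omega> \<Longrightarrow> f x > 0"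
  shows "integral \<Omega> f > 0"
proof -
  have cl: "compact (closure \<Omega>)" using assms(2) by (simp add: compact_closure)
  then obtain B where B: "\<And>x. x \<in> closure \<Omega> \<Longrightarrow> norm (f x) \<le> B"
    using compact_continuous_image[OF assms(4) cl] compact_imp_bounded bounded_iff by (metis imageI)
  have lm: "\<Omega> \<in> lmeasurable" using lmeasurable_open assms by blast
  have co: "continuous_on \<Omega> f" using assms(4) continuous_on_subset closure_subset by blast
  have int: "f integrable_on \<Omega>"
  proof -
    have "f absolutely_integrable_on \<Omega>"
      apply (rule measurable_bounded_by_integrable_imp_absolutely_integrable[where g="\<lambda>x. B"])
      using continuous_imp_measurable_on_sets_lebesgue[OF co] lm integrable_on_const[OF lm] B closure_subset
      by auto
    then show ?thesis by (simp add: absolutely_integrable_on_def)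
  qed
  obtain x where x: "x \<in> \<Omega>" using assms(3) by blast
  have fx: "f x > 0" using assms(5) x closure_subset by blast
  obtain e where e: "e > 0" "\<And>y. y \<in> \<Omega> \<Longrightarrow> dist y x < e \<Longrightarrow> dist (f y) (f x) < f x / 2"
    using co x fx unfolding continuous_on_iff by (metis half_gt_zero)
  obtain e' where e': "e' > 0" "ball x e' \<subseteq> \<Omega>" using assms(1) x open_contains_ball by blast
  define T where "T = ball x (min e e')"
  have "open T" "x \<in> T" using e e' by (auto simp: T_def)
  then obtain a b where ab: "cbox a b \<subseteq> T" "\<forall>i\<in>Basis. a \<bullet> i < b \<bullet> i"
    using open_contains_cbox by metis
  have sub: "cbox a b \<subseteq> \<Omega>" proof -
    have "T \<subseteq> ball x e'" unfolding T_def by (rule subset_ball) simp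
    then show ?thesis using ab e' by blast
  qed
  have lb: "\<And>y. y \<in> cbox a b \<Longrightarrow> f y \<ge> f x / 2"
  proof -
    fix y assume "y \<in> cbox a b"
    then have "y \<in> \<Omega>" "dist y x < e" using ab sub by (auto simp: T_def dist_commute)
    then have "dist (f y) (f x) < f x / 2" using e by blast
    then show "f y \<ge> f x / 2" unfolding dist_real_def by linarith
  qed
  have intc: "f integrable_on cbox a b"
    by (rule integrable_continuous) (use co sub continuous_on_subset in blast)
  have "0 < Henstock_Kurzweil_Integration.content (cbox a b) *\<^sub>R (f x / 2)"
    using content_pos_lt[OF ab(2)] fx by simp
  also have "\<dots> = integral (cbox a b) (\<lambda>_. f x / 2)" by simp
  also have "\<dots> \<le> integral (cbox a b) f"
    by (rule integral_le) (use intc lb in auto)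
  also have "\<dots> \<le> integral \<Omega> f"
  proof (rule integral_subset_le[OF sub intc int])
    show "\<forall>y\<in>\<Omega>. 0 \<le> f y" using assms(5) closure_subset by (meson less_imp_le subsetD)
  qed
  finally show ?thesis .
qed

lemma half:
  fixes \<Omega> :: "'a::euclidean_space set" and u U1 U2 :: "'a \<Rightarrow> real"
  assumes op: "open \<Omega>" and ne: "\<Omega> \<noteq> {}" and bd: "bounded \<Omega>"
    and cu: "continuous_on (closure \<Omega>) u"
    and s1: "is_solution \<Omega> u U1" and s2: "is_solution \<Omega> u U2"
    and le: "integral \<Omega> (\<lambda>x. exp (- u x - U1 x)) \<ge> integral \<Omega> (\<lambda>x. exp (- u x - U2 x))"
  shows "\<forall>x\<in>\<Omega>. U1 x \<le> U2 x"
proof (rule ccontr)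
  assume "\<not> (\<forall>x\<in>\<Omega>. U1 x \<le> U2 x)"
  then obtain x1 where x1: "x1 \<in> \<Omega>" "U1 x1 > U2 x1" by force
  have c1: "continuous_on (closure \<Omega>) U1" and c2: "continuous_on (closure \<Omega>) U2"
    using s1 s2 by (auto simp: is_solution_def)
  have cW: "continuous_on (closure \<Omega>) (\<lambda>x. U1 x - U2 x)"
    using c1 c2 by (intro continuous_intros)
  have cp: "compact (closure \<Omega>)" using bd by (simp add: compact_closure)
  obtain x0 where x0: "x0 \<in> closure \<Omega>" "\<And>y. y \<in> closure \<Omega> \<Longrightarrow> U1 y - U2 y \<le> U1 x0 - U2 x0"
    using continuous_attains_sup[OF cp _ cW] ne by (metis closure_eq_empty)
  have pos: "U1 x0 - U2 x0 > 0" using x0(2)[of x1] x1 closure_subset by force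
  have "x0 \<notin> frontier \<Omega>"
    using pos s1 s2 by (auto simp: is_solution_def)
  then have x0O: "x0 \<in> \<Omega>" using x0(1) op by (simp add: frontier_def interior_open)
  define I1 where "I1 = integral \<Omega> (\<lambda>x. exp (- u x - U1 x))"
  define I2 where "I2 = integral \<Omega> (\<lambda>x. exp (- u x - U2 x))"
  have I2: "I2 > 0" unfolding I2_def
    by (rule integral_pos[OF op bd ne]) (use cu c2 in \<open>auto intro!: continuous_intros\<close>)
  have e1: "(\<lambda>y. exp (- (U1 y + u y))) = (\<lambda>x. exp (- u x - U1 x))" by (auto simp: fun_eq_iff algebra_simps)
  have e2: "(\<lambda>y. exp (- (U2 y + u y))) = (\<lambda>x. exp (- u x - U2 x))" by (auto simp: fun_eq_iff algebra_simps)
  have L1: "- laplacian U1 x0 = exp (- u x0 - U1 x0) / I1"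
    using s1 x0O unfolding is_solution_def I1_def e1 by (auto simp: algebra_simps)
  have L2: "- laplacian U2 x0 = exp (- u x0 - U2 x0) / I2"
    using s2 x0O unfolding is_solution_def I2_def e2 by (auto simp: algebra_simps)
  have "exp (- u x0 - U1 x0) / I1 \<le> exp (- u x0 - U1 x0) / I2"
    by (rule divide_left_mono) (use le I2 in \<open>auto simp: I1_def I2_def\<close>)
  also have "\<dots> < exp (- u x0 - U2 x0) / I2"
    using I2 pos by (simp add: divide_strict_right_mono)
  finally have "laplacian U1 x0 > laplacian U2 x0" using L1 L2 by linarith
  then obtain i where i: "i \<in> Basis" "dderiv [i, i] U1 x0 > dderiv [i, i] U2 x0"
    unfolding laplacian_def by (meson not_le sum_mono)
  obtain r where r: "r > 0" "ball x0 r \<subseteq> \<Omega>" using op x0O open_contains_ball by blast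
  have inb: "x0 + t *\<^sub>R i \<in> \<Omega>" if "\<bar>t\<bar> < r" for t
    using that i(1) r(2) by (auto simp: dist_norm)
  have C1: "C2_on \<Omega> U1" and C2: "C2_on \<Omega> U2" using s1 s2 by (auto simp: is_solution_def)
  define g where "g = (\<lambda>t. U1 (x0 + t *\<^sub>R i) - U2 (x0 + t *\<^sub>R i))"
  define g' where "g' = (\<lambda>t. dderiv [i] U1 (x0 + t *\<^sub>R i) - dderiv [i] U2 (x0 + t *\<^sub>R i))"
  show False
  proof (rule second_deriv_max[of r g g' "dderiv [i, i] U1 x0 - dderiv [i, i] U2 x0"])
    show "r > 0" by fact
    show "(g has_real_derivative g' t) (at t)" if "\<bar>t\<bar> < r" for t
      unfolding g_def g'_def
      using inb[OF that] C1 C2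
      by (auto simp: C2_on_def intro!: DERIV_diff line_deriv)
    have d1: "dderiv [i] U1 differentiable (at (x0 + 0 *\<^sub>R i))"
      using C1 x0O i(1) by (auto simp: C2_on_def)
    have d2: "dderiv [i] U2 differentiable (at (x0 + 0 *\<^sub>R i))"
      using C2 x0O i(1) by (auto simp: C2_on_def)
    show "(g' has_real_derivative dderiv [i, i] U1 x0 - dderiv [i, i] U2 x0) (at 0)"
      unfolding g'_def using DERIV_diff[OF line_deriv[OF d1] line_deriv[OF d2]] by simp
    show "dderiv [i, i] U1 x0 - dderiv [i, i] U2 x0 > 0" using i by simp
    show "g t \<le> g 0" if "\<bar>t\<bar> < r" for t
      unfolding g_def using x0(2)[of "x0 + t *\<^sub>R i"] inb[OF that] closure_subset by auto
  qed
qed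


theorem mainTheorem2:
  fixes \<Omega> :: "'a::euclidean_space set" and u U1 U2 :: "'a \<Rightarrow> real"
  assumes "open \<Omega>" and "connected \<Omega>" and "\<Omega> \<noteq> {}"
    and "bounded \<Omega>" and "convex \<Omega>" and "smooth_boundary \<Omega>"
    and "continuous_on (closure \<Omega>) u"
    and "is_solution \<Omega> u U1" and "is_solution \<Omega> u U2"
  shows "(integral \<Omega> (\<lambda>x. exp (- u x - U1 x)) \<ge> integral \<Omega> (\<lambda>x. exp (- u x - U2 x))
            \<longrightarrow> (\<forall>x\<in>\<Omega>. U1 x \<le> U2 x))
       \<and> (integral \<Omega> (\<lambda>x. exp (- u x - U1 x)) = integral \<Omega> (\<lambda>x. exp (- u x - U2 x))
            \<longrightarrow> (\<forall>x\<in>\<Omega>. U1 x = U2 x))"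
proof (intro conjI impI)
  assume "integral \<Omega> (\<lambda>x. exp (- u x - U1 x)) \<ge> integral \<Omega> (\<lambda>x. exp (- u x - U2 x))"
  then show "\<forall>x\<in>\<Omega>. U1 x \<le> U2 x" using half assms by blast
next
  assume h: "integral \<Omega> (\<lambda>x. exp (- u x - U1 x)) = integral \<Omega> (\<lambda>x. exp (- u x - U2 x))"
  have "\<forall>x\<in>\<Omega>. U1 x \<le> U2 x" using half[of \<Omega> u U1 U2] h assms by simp
  moreover have "\<forall>x\<in>\<Omega>. U2 x \<le> U1 x" using half[of \<Omega> u U2 U1] h assms by simp
  ultimately show "\<forall>x\<in>\<Omega>. U1 x = U2 x" by (meson order_antisym)
qed

end
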